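(* Assume the setting in the context, with $a<t_1<\dots<t_n<b$, $n>m$, $T$ ($T[i,j]=u_j(t_i)$) of full column rank $m$, $K$ ($K[i,j]=R_1(t_i,t_j)$) invertible, $D$ diagonal with positive entries $d_i$, $\lambda>0$, and $M=K+\lambda D^{-1}$. Let $Q$ be an $n\times(n-m)$ matrix of full column rank such that $Q'T=0$ and $Q_{ij}=0$ unless $i\in\{j,j+1,\dots,j+m\}$. Then: (i) $[Q'MQ]_{kl}=0$ whenever $|k-l|>m$ (i.e. $Q'MQ$ is banded with bandwidth $m$), and in fact $[Q'KQ]_{kl}=0$ and $[Q'D^{-1}Q]_{kl}=0$ for $|k-l|>m$; (ii) the unique minimizer $(\hat\alpha,\hat\beta)$ of $(\mathbf Y-T\alpha-K\beta)'D(\mathbf Y-T\alpha-K\beta)+\lambda\beta'K\beta$ satisfies $T'\hat\beta=0$, $$\hat\beta=Q(Q'MQ)^{-1}Q'\mathbf Y,\qquad\hat\alpha=(T'T)^{-1}T'(\mathbf Y-M\hat\beta),$$ and the fitted vector $\hat{\mathbf Y}=T\hat\alpha+K\hat\beta$ equals $\mathbf Y-\lambda D^{-1}\hat\beta$.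
   Context: $[a,b]$ is a finite interval, $m\ge1$, $w_0,\dots,w_{m-1}$ continuous real functions on $[a,b]$, $(L\mu)(t)=\mu^{(m)}(t)+\sum_{j=0}^{m-1}w_j(t)\mu^{(j)}(t)$. $u_1,\dots,u_m$ are real, $m$ times differentiable functions forming a basis of $\{\mu:L\mu\equiv0\}$, with Wronskian $[W(t)]_{ij}=u_i^{(j-1)}(t)$ invertible for all $t\in[a,b]$; $(u_1^*(t),\dots,u_m^*(t))$ is the last row of $W(t)^{-1}$. The Green's function is $\mathcal G(t,u)=\sum_{i=1}^mu_i(t)u_i^*(u)$ for $u\le t$ and $0$ otherwise, and $R_1(s,t)=\int_a^b\mathcal G(s,u)\mathcal G(t,u)\,du$. $\mathbf Y=(Y_1,\dots,Y_n)'\in\mathbb R^n$. *)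

theory Defs
  imports "HOL-Analysis.Henstock_Kurzweil_Integration"
          "Jordan_Normal_Form.Gauss_Jordan_Elimination"
          "Jordan_Normal_Form.DL_Rank"
begin

text \<open>All indices are 0-based: functions u 0, ..., u (m-1); points t 0 < ... < t (n-1);
  matrix entries A $$ (i,j) with i, j starting at 0.\<close>

definition has_derivs_on :: "nat \<Rightarrow> (nat \<Rightarrow> real \<Rightarrow> real) \<Rightarrow> real set \<Rightarrow> bool" where
  "has_derivs_on k D S \<longleftrightarrow>
     (\<forall>j<k. \<forall>x\<in>S. (D j has_real_derivative D (Suc j) x) (at x within S))"

definition L_annihilates :: "real \<Rightarrow> real \<Rightarrow> nat \<Rightarrow> (nat \<Rightarrow> real \<Rightarrow> real) \<Rightarrow> (nat \<Rightarrow> real \<Rightarrow> real) \<Rightarrow> bool" where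
  "L_annihilates a b m w D \<longleftrightarrow> has_derivs_on m D {a..b} \<and>
     (\<forall>x\<in>{a..b}. D m x + (\<Sum>j<m. w j x * D j x) = 0)"

definition in_ker_L :: "real \<Rightarrow> real \<Rightarrow> nat \<Rightarrow> (nat \<Rightarrow> real \<Rightarrow> real) \<Rightarrow> (real \<Rightarrow> real) \<Rightarrow> bool" where
  "in_ker_L a b m w \<mu> \<longleftrightarrow> (\<exists>D. (\<forall>x\<in>{a..b}. D 0 x = \<mu> x) \<and> L_annihilates a b m w D)"

definition is_ker_basis :: "real \<Rightarrow> real \<Rightarrow> nat \<Rightarrow> (nat \<Rightarrow> real \<Rightarrow> real) \<Rightarrow> (nat \<Rightarrow> real \<Rightarrow> real)
    \<Rightarrow> (nat \<Rightarrow> nat \<Rightarrow> real \<Rightarrow> real) \<Rightarrow> bool" where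
  "is_ker_basis a b m w u Du \<longleftrightarrow>
     (\<forall>i<m. (\<forall>x\<in>{a..b}. Du i 0 x = u i x) \<and> L_annihilates a b m w (Du i)) \<and>
     (\<forall>c::nat \<Rightarrow> real. (\<forall>x\<in>{a..b}. (\<Sum>i<m. c i * u i x) = 0) \<longrightarrow> (\<forall>i<m. c i = 0)) \<and>
     (\<forall>\<mu>. in_ker_L a b m w \<mu> \<longrightarrow> (\<exists>c::nat \<Rightarrow> real. \<forall>x\<in>{a..b}. \<mu> x = (\<Sum>i<m. c i * u i x)))"

definition minv :: "real mat \<Rightarrow> real mat" where
  "minv A = the (mat_inverse A)"

definition wronskian :: "nat \<Rightarrow> (nat \<Rightarrow> nat \<Rightarrow> real \<Rightarrow> real) \<Rightarrow> real \<Rightarrow> real mat" where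
  "wronskian m Du x = mat m m (\<lambda>(i,j). Du i j x)"

definition ustar :: "nat \<Rightarrow> (nat \<Rightarrow> nat \<Rightarrow> real \<Rightarrow> real) \<Rightarrow> nat \<Rightarrow> real \<Rightarrow> real" where
  "ustar m Du i x = minv (wronskian m Du x) $$ (m - 1, i)"

definition green :: "nat \<Rightarrow> (nat \<Rightarrow> real \<Rightarrow> real) \<Rightarrow> (nat \<Rightarrow> nat \<Rightarrow> real \<Rightarrow> real) \<Rightarrow> real \<Rightarrow> real \<Rightarrow> real" where
  "green m u Du x s = (if s \<le> x then (\<Sum>i<m. u i x * ustar m Du i s) else 0)"

definition R1 :: "real \<Rightarrow> real \<Rightarrow> nat \<Rightarrow> (nat \<Rightarrow> real \<Rightarrow> real) \<Rightarrow> (nat \<Rightarrow> nat \<Rightarrow> real \<Rightarrow> real) \<Rightarrow> real \<Rightarrow> real \<Rightarrow> real" where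
  "R1 a b m u Du s x = integral {a..b} (\<lambda>v. green m u Du s v * green m u Du x v)"

definition ridge_obj :: "real vec \<Rightarrow> real mat \<Rightarrow> real mat \<Rightarrow> real mat \<Rightarrow> real \<Rightarrow> real vec \<Rightarrow> real vec \<Rightarrow> real" where
  "ridge_obj Y T K D lam \<alpha> \<beta> =
     (Y - T *\<^sub>v \<alpha> - K *\<^sub>v \<beta>) \<bullet> (D *\<^sub>v (Y - T *\<^sub>v \<alpha> - K *\<^sub>v \<beta>)) + lam * (\<beta> \<bullet> (K *\<^sub>v \<beta>))"

definition is_ridge_minimizer :: "nat \<Rightarrow> nat \<Rightarrow> real vec \<Rightarrow> real mat \<Rightarrow> real mat \<Rightarrow> real mat \<Rightarrow> real
    \<Rightarrow> real vec \<times> real vec \<Rightarrow> bool" where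
  "is_ridge_minimizer n m Y T K D lam p \<longleftrightarrow>
     fst p \<in> carrier_vec m \<and> snd p \<in> carrier_vec n \<and>
     (\<forall>\<alpha>\<in>carrier_vec m. \<forall>\<beta>\<in>carrier_vec n.
        ridge_obj Y T K D lam (fst p) (snd p) \<le> ridge_obj Y T K D lam \<alpha> \<beta>)"

end

theory Submission
  imports Defs
begin


lemma minv_props:
  fixes A :: "real mat"
  assumes A: "A \<in> carrier_mat n n" and d: "det A \<noteq> 0"
  shows "minv A \<in> carrier_mat n n" "A * minv A = 1\<^sub>m n" "minv A * A = 1\<^sub>m n"
proof -
  have U: "A \<in> Units (ring_mat TYPE(real) n ())" by (rule det_non_zero_imp_unit[OF A d])
  have "mat_inverse A \<noteq> None"
  proof
    assume "mat_inverse A = None"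
    from mat_inverse(1)[OF A this, where b="()"] U show False by simp
  qed
  then obtain B where B: "mat_inverse A = Some B" by auto
  have "minv A = B" unfolding minv_def B by simp
  then show "minv A \<in> carrier_mat n n" "A * minv A = 1\<^sub>m n" "minv A * A = 1\<^sub>m n"
    using mat_inverse(2)[OF A B] by auto
qed

lemma minv_unique:
  fixes A B :: "real mat"
  assumes A: "A \<in> carrier_mat n n" and d: "det A \<noteq> 0" and B: "B \<in> carrier_mat n n"
    and AB: "A * B = 1\<^sub>m n"
  shows "minv A = B"
proof -
  note p = minv_props[OF A d]
  have "minv A = minv A * (A * B)" using p(1) AB by simp
  also have "\<dots> = (minv A * A) * B" using p(1) A B by (simp add: assoc_mult_mat)
  also have "\<dots> = B" using p(3) B by simp
  finally show ?thesis .
qed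

lemma det_nz_ker:
  fixes A :: "real mat"
  assumes A: "A \<in> carrier_mat n n"
    and k: "\<And>v. v \<in> carrier_vec n \<Longrightarrow> A *\<^sub>v v = 0\<^sub>v n \<Longrightarrow> v = 0\<^sub>v n"
  shows "det A \<noteq> 0"
  using det_0_iff_vec_prod_zero_field[OF A] k by blast

lemma invertible_det_nz:
  fixes A :: "real mat"
  assumes A: "A \<in> carrier_mat n n" and inv: "invertible_mat A"
  shows "det A \<noteq> 0"
proof (rule det_nz_ker[OF A])
  fix v :: "real vec" assume v: "v \<in> carrier_vec n" and Av: "A *\<^sub>v v = 0\<^sub>v n"
  from inv obtain B where AB: "A * B = 1\<^sub>m (dim_row A)" and BA: "B * A = 1\<^sub>m (dim_row B)"
    unfolding invertible_mat_def inverts_mat_def by auto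
  have "dim_row (B * A) = dim_row B" by simp
  have Bc: "B \<in> carrier_mat n n"
  proof -
    have "dim_col B = n" using AB A by (metis carrier_matD(1) index_mult_mat(3) index_one_mat(3))
    moreover have "dim_row B = n" using BA A by (metis carrier_matD(2) index_mult_mat(3) index_one_mat(3))
    ultimately show ?thesis by auto
  qed
  have "v = (B * A) *\<^sub>v v" using BA Bc v by simp
  also have "\<dots> = B *\<^sub>v (A *\<^sub>v v)" using Bc A v by simp
  also have "\<dots> = 0\<^sub>v n" using Av Bc by (intro eq_vecI) auto
  finally show "v = 0\<^sub>v n" .
qed

lemma diag_mult_vec:
  fixes D :: "real mat"
  assumes D: "D \<in> carrier_mat n n" and dg: "diagonal_mat D" and v: "v \<in> carrier_vec n"
  shows "D *\<^sub>v v = vec n (\<lambda>i. D $$ (i,i) * v $ i)"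
proof (rule eq_vecI)
  fix i assume "i < dim_vec (vec n (\<lambda>i. D $$ (i,i) * v $ i))"
  then have i: "i < n" by simp
  have "(D *\<^sub>v v) $ i = (\<Sum>j<n. D $$ (i,j) * v $ j)"
    using D v i by (simp add: scalar_prod_def lessThan_atLeast0)
  also have "\<dots> = (\<Sum>j<n. if j = i then D $$ (i,i) * v $ i else 0)"
    by (rule sum.cong, insert dg D i, auto simp: diagonal_mat_def)
  also have "\<dots> = D $$ (i,i) * v $ i" using i by simp
  finally show "(D *\<^sub>v v) $ i = vec n (\<lambda>i. D $$ (i,i) * v $ i) $ i" using i by simp
qed (insert D, auto)

lemma smult_mat_vec:
  fixes A :: "real mat"
  assumes A: "A \<in> carrier_mat n n" and v: "v \<in> carrier_vec n"
  shows "(c \<cdot>\<^sub>m A) *\<^sub>v v = c \<cdot>\<^sub>v (A *\<^sub>v v)"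
  by (rule eq_vecI, insert A v, auto simp: scalar_prod_def sum_distrib_left ac_simps)

lemma sym_form:
  fixes S :: "real mat"
  assumes S: "S \<in> carrier_mat n n" and st: "transpose_mat S = S"
    and x: "x \<in> carrier_vec n" and y: "y \<in> carrier_vec n"
  shows "x \<bullet> (S *\<^sub>v y) = y \<bullet> (S *\<^sub>v x)"
proof -
  have "y \<bullet> (S *\<^sub>v x) = (transpose_mat S *\<^sub>v y) \<bullet> x"
    using transpose_vec_mult_scalar[OF S x y] by simp
  also have "\<dots> = x \<bullet> (S *\<^sub>v y)" using st comm_scalar_prod[of "S *\<^sub>v y" n x] S x y by simp
  finally show ?thesis by simp
qed

lemma quad_sub:
  fixes S :: "real mat"
  assumes S: "S \<in> carrier_mat n n" and st: "transpose_mat S = S"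
    and x: "x \<in> carrier_vec n" and y: "y \<in> carrier_vec n"
  shows "(x - y) \<bullet> (S *\<^sub>v (x - y)) = x \<bullet> (S *\<^sub>v x) - 2 * (y \<bullet> (S *\<^sub>v x)) + y \<bullet> (S *\<^sub>v y)"
proof -
  have Sx: "S *\<^sub>v x \<in> carrier_vec n" and Sy: "S *\<^sub>v y \<in> carrier_vec n" using S x y by auto
  have "(x - y) \<bullet> (S *\<^sub>v (x - y)) = (x - y) \<bullet> (S *\<^sub>v x - S *\<^sub>v y)"
    using mult_minus_distrib_mat_vec[OF S x y] by simp
  also have "\<dots> = x \<bullet> (S *\<^sub>v x) - y \<bullet> (S *\<^sub>v x) - (x \<bullet> (S *\<^sub>v y) - y \<bullet> (S *\<^sub>v y))"
    using x y Sx Sy by (simp add: scalar_prod_minus_distrib[of _ n] minus_scalar_prod_distrib[of _ n])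
  also have "x \<bullet> (S *\<^sub>v y) = y \<bullet> (S *\<^sub>v x)" by (rule sym_form[OF S st x y])
  finally show ?thesis by simp
qed

lemma quad_add:
  fixes S :: "real mat"
  assumes S: "S \<in> carrier_mat n n" and st: "transpose_mat S = S"
    and x: "x \<in> carrier_vec n" and y: "y \<in> carrier_vec n"
  shows "(x + y) \<bullet> (S *\<^sub>v (x + y)) = x \<bullet> (S *\<^sub>v x) + 2 * (y \<bullet> (S *\<^sub>v x)) + y \<bullet> (S *\<^sub>v y)"
proof -
  have Sx: "S *\<^sub>v x \<in> carrier_vec n" and Sy: "S *\<^sub>v y \<in> carrier_vec n" using S x y by auto
  have "(x + y) \<bullet> (S *\<^sub>v (x + y)) = (x + y) \<bullet> (S *\<^sub>v x + S *\<^sub>v y)"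
    using mult_add_distrib_mat_vec[OF S x y] by simp
  also have "\<dots> = x \<bullet> (S *\<^sub>v x) + y \<bullet> (S *\<^sub>v x) + (x \<bullet> (S *\<^sub>v y) + y \<bullet> (S *\<^sub>v y))"
    using x y Sx Sy by (simp add: scalar_prod_add_distrib[of _ n] add_scalar_prod_distrib[of _ n])
  also have "x \<bullet> (S *\<^sub>v y) = y \<bullet> (S *\<^sub>v x)" by (rule sym_form[OF S st x y])
  finally show ?thesis by simp
qed

lemma self_scalar_zero:
  fixes v :: "real vec"
  assumes v: "v \<in> carrier_vec n" and z: "v \<bullet> v = 0"
  shows "v = 0\<^sub>v n"
proof -
  have "(\<Sum>i\<in>{0..<n}. v $ i * v $ i) = 0" using z v by (simp add: scalar_prod_def)
  then have "\<forall>i\<in>{0..<n}. v $ i * v $ i = 0"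
    by (subst (asm) sum_nonneg_eq_0_iff) auto
  then show ?thesis using v by (intro eq_vecI) auto
qed

lemma self_scalar_nonneg:
  fixes v :: "real vec"
  shows "v \<bullet> v \<ge> 0"
  unfolding scalar_prod_def by (rule sum_nonneg) auto


lemma Du_cont:
  assumes basis: "is_ker_basis a b m w u Du" and i: "i < m" and j: "j < m"
  shows "continuous_on {a..b} (Du i j)"
proof -
  have "L_annihilates a b m w (Du i)" using basis i unfolding is_ker_basis_def by blast
  then have "\<forall>x\<in>{a..b}. (Du i j has_real_derivative Du i (Suc j) x) (at x within {a..b})"
    using j unfolding L_annihilates_def has_derivs_on_def by blast
  then show ?thesis
    unfolding continuous_on_eq_continuous_within using DERIV_continuous by blast
qed

lemma cont_det:
  fixes F :: "real \<Rightarrow> real mat"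
  assumes F: "\<And>x. x \<in> S \<Longrightarrow> F x \<in> carrier_mat k k"
    and c: "\<And>i j. i < k \<Longrightarrow> j < k \<Longrightarrow> continuous_on S (\<lambda>x. F x $$ (i,j))"
  shows "continuous_on S (\<lambda>x. det (F x))"
proof -
  have "continuous_on S (\<lambda>x. \<Sum> p \<in> {p. p permutes {0 ..< k}}. signof p * (\<Prod> i = 0 ..< k. F x $$ (i, p i)))"
  proof (intro continuous_on_sum continuous_on_mult continuous_on_const continuous_on_prod)
    fix p i assume p: "p \<in> {p. p permutes {0 ..< k}}" and i: "i \<in> {0..<k}"
    then have "p i < k" using permutes_in_image[of p "{0..<k}" i] by auto
    then show "continuous_on S (\<lambda>x. F x $$ (i, p i))" using c i by auto
  qed
  then show ?thesis
    by (rule continuous_on_eq) (simp add: det_def'[OF F])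
qed

lemma minv_adj:
  fixes A :: "real mat"
  assumes A: "A \<in> carrier_mat n n" and d: "det A \<noteq> 0"
  shows "minv A = (1 / det A) \<cdot>\<^sub>m adj_mat A"
proof (rule minv_unique[OF A d])
  show "(1 / det A) \<cdot>\<^sub>m adj_mat A \<in> carrier_mat n n" using adj_mat(1)[OF A] by simp
  have "A * ((1 / det A) \<cdot>\<^sub>m adj_mat A) = (1 / det A) \<cdot>\<^sub>m (A * adj_mat A)"
    using mult_smult_distrib[OF A adj_mat(1)[OF A]] by simp
  also have "\<dots> = (1 / det A) \<cdot>\<^sub>m (det A \<cdot>\<^sub>m 1\<^sub>m n)" using adj_mat(2)[OF A] by simp
  also have "\<dots> = 1\<^sub>m n" using d by (intro eq_matI) auto
  finally show "A * ((1 / det A) \<cdot>\<^sub>m adj_mat A) = 1\<^sub>m n" .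
qed

lemma wr_carrier: "wronskian m Du x \<in> carrier_mat m m"
  unfolding wronskian_def by simp

lemma ustar_formula:
  assumes d: "det (wronskian m Du x) \<noteq> 0" and m1: "1 \<le> m" and p: "p < m"
  shows "ustar m Du p x = cofactor (wronskian m Du x) p (m - 1) / det (wronskian m Du x)"
proof -
  have "ustar m Du p x = ((1 / det (wronskian m Du x)) \<cdot>\<^sub>m adj_mat (wronskian m Du x)) $$ (m - 1, p)"
    unfolding ustar_def minv_adj[OF wr_carrier d] by simp
  also have "\<dots> = cofactor (wronskian m Du x) p (m - 1) / det (wronskian m Du x)"
    using m1 p by (simp add: adj_mat_def wronskian_def)
  finally show ?thesis .
qed

lemma ustar_cont:
  assumes basis: "is_ker_basis a b m w u Du" and m1: "1 \<le> m"
    and W_inv: "\<forall>x\<in>{a..b}. invertible_mat (wronskian m Du x)" and p: "p < m"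
  shows "continuous_on {a..b} (ustar m Du p)"
proof -
  have dnz: "\<And>x. x \<in> {a..b} \<Longrightarrow> det (wronskian m Du x) \<noteq> 0"
    using W_inv invertible_det_nz[OF wr_carrier] by blast
  have cd: "continuous_on {a..b} (\<lambda>x. det (wronskian m Du x))"
    by (rule cont_det[where k = m], rule wr_carrier, simp add: wronskian_def Du_cont[OF basis])
  have cdel: "continuous_on {a..b} (\<lambda>x. det (mat_delete (wronskian m Du x) p (m - 1)))"
  proof (rule cont_det[where k = "m - 1"])
    fix x show "mat_delete (wronskian m Du x) p (m - 1) \<in> carrier_mat (m - 1) (m - 1)"
      using mat_delete_carrier[OF wr_carrier] .
  next
    fix i j assume i: "i < m - 1" and j: "j < m - 1"
    define i' where "i' = (if i < p then i else Suc i)"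
    define j' where "j' = (if j < m - 1 then j else Suc j)"
    have i'm: "i' < m" and j'm: "j' < m" using i j p unfolding i'_def j'_def by auto
    have "\<And>x. mat_delete (wronskian m Du x) p (m - 1) $$ (i,j) = Du i' j' x"
      using i j i'm j'm unfolding mat_delete_def wronskian_def i'_def j'_def by simp
    then show "continuous_on {a..b} (\<lambda>x. mat_delete (wronskian m Du x) p (m - 1) $$ (i,j))"
      using Du_cont[OF basis i'm j'm] by simp
  qed
  have "continuous_on {a..b} (\<lambda>x. ((-1)^(p + (m - 1)) * det (mat_delete (wronskian m Du x) p (m - 1)))
      / det (wronskian m Du x))"
    by (intro continuous_on_divide continuous_on_mult continuous_on_const cdel cd) (use dnz in auto)
  then show ?thesis
    by (rule continuous_on_eq) (use dnz m1 p in \<open>auto simp: ustar_formula cofactor_def\<close>)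
qed

lemma cut_integrable:
  fixes f :: "real \<Rightarrow> real"
  assumes f: "continuous_on {a..b} f"
  shows "(\<lambda>v. if v \<le> c then f v else 0) integrable_on {a..b}"
proof -
  have "f integrable_on {a..min b c}"
    by (rule integrable_continuous_interval, rule continuous_on_subset[OF f]) auto
  moreover have "{..c} \<inter> {a..b} = {a..min b c}" by auto
  ultimately have "(\<lambda>v. if v \<in> {..c} then f v else 0) integrable_on {a..b}"
    using integrable_restrict_Int by metis
  then show ?thesis by simp
qed

lemma green_prod_integrable:
  assumes basis: "is_ker_basis a b m w u Du" and m1: "1 \<le> m"
    and W_inv: "\<forall>x\<in>{a..b}. invertible_mat (wronskian m Du x)"
  shows "(\<lambda>v. green m u Du x v * green m u Du y v) integrable_on {a..b}"
proof -
  have hc: "continuous_on {a..b} (\<lambda>v. (\<Sum>i<m. u i z * ustar m Du i v))" for z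
    by (intro continuous_on_sum continuous_on_mult continuous_on_const ustar_cont[OF basis m1 W_inv]) auto
  have "(\<lambda>v. if v \<le> min x y then (\<Sum>i<m. u i x * ustar m Du i v) * (\<Sum>i<m. u i y * ustar m Du i v) else 0)
     integrable_on {a..b}"
    by (rule cut_integrable, intro continuous_on_mult hc)
  moreover have "(\<lambda>v. green m u Du x v * green m u Du y v) = (\<lambda>v. if v \<le> min x y then (\<Sum>i<m. u i x * ustar m Du i v) * (\<Sum>i<m. u i y * ustar m Du i v) else 0)"
    by (auto simp: green_def fun_eq_iff)
  ultimately show ?thesis by simp
qed



lemma t_strict:
  assumes t_mono: "\<forall>i. Suc i < n \<longrightarrow> t i < t (Suc i)" and ij: "i < j" and j: "j < n"
  shows "t i < (t j :: real)"
  using ij j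
proof (induction j)
  case 0 then show ?case by simp
next
  case (Suc j)
  then have "t j < t (Suc j)" using t_mono by auto
  moreover have "i = j \<or> i < j" using Suc by auto
  ultimately show ?case using Suc by auto
qed

lemma t_le:
  assumes t_mono: "\<forall>i. Suc i < n \<longrightarrow> t i < t (Suc i)" and ij: "i \<le> j" and j: "j < n"
  shows "t i \<le> (t j :: real)"
  using t_strict[OF t_mono _ j, of i] ij by (cases "i = j") auto

lemma Kform:
  assumes basis: "is_ker_basis a b m w u Du" and m1: "1 \<le> m"
    and W_inv: "\<forall>x\<in>{a..b}. invertible_mat (wronskian m Du x)"
    and K_def: "K = mat n n (\<lambda>(i,j). R1 a b m u Du (t i) (t j))"
    and x: "x \<in> carrier_vec n" and y: "y \<in> carrier_vec n"
  shows "x \<bullet> (K *\<^sub>v y) = integral {a..b} (\<lambda>v. (\<Sum>i<n. x $ i * green m u Du (t i) v) * (\<Sum>j<n. y $ j * green m u Du (t j) v))"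
proof -
  let ?G = "\<lambda>i v. green m u Du (t i) v"
  have I: "(\<lambda>v. ?G i v * ?G j v) integrable_on {a..b}" for i j
    by (rule green_prod_integrable[OF basis m1 W_inv])
  have I2: "(\<lambda>v. c * (?G i v * ?G j v)) integrable_on {a..b}" for c i j
    using integrable_on_cmult_left[OF I, of c i j] by simp
  have "x \<bullet> (K *\<^sub>v y) = (\<Sum>i<n. x $ i * (\<Sum>j<n. K $$ (i,j) * y $ j))"
    using x y K_def by (simp add: scalar_prod_def lessThan_atLeast0)
  also have "\<dots> = (\<Sum>i<n. \<Sum>j<n. integral {a..b} (\<lambda>v. (x $ i * y $ j) * (?G i v * ?G j v)))"
    using K_def by (simp add: R1_def sum_distrib_left ac_simps)
  also have "\<dots> = (\<Sum>i<n. integral {a..b} (\<lambda>v. \<Sum>j<n. (x $ i * y $ j) * (?G i v * ?G j v)))"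
    by (rule sum.cong[OF refl], rule integral_sum[symmetric]) (auto simp: I2)
  also have "\<dots> = integral {a..b} (\<lambda>v. \<Sum>i<n. \<Sum>j<n. (x $ i * y $ j) * (?G i v * ?G j v))"
    by (rule integral_sum[symmetric]) (auto intro!: integrable_sum simp: I2)
  also have "\<dots> = integral {a..b} (\<lambda>v. (\<Sum>i<n. x $ i * ?G i v) * (\<Sum>j<n. y $ j * ?G j v))"
    by (simp add: sum_product ac_simps)
  finally show ?thesis .
qed

lemma QAQ_entry:
  fixes A Q :: "real mat"
  assumes A: "A \<in> carrier_mat n n" and Q: "Q \<in> carrier_mat n r" and k: "k < r" and l: "l < r"
  shows "(transpose_mat Q * A * Q) $$ (k,l) = col Q k \<bullet> (A *\<^sub>v col Q l)"
proof -
  have "transpose_mat Q * A * Q = transpose_mat Q * (A * Q)"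
    using A Q by (simp add: assoc_mult_mat[of _ r n])
  moreover have "(transpose_mat Q * (A * Q)) $$ (k,l) = row (transpose_mat Q) k \<bullet> col (A * Q) l"
    using A Q k l by simp
  moreover have "col (A * Q) l = A *\<^sub>v col Q l" by (rule col_mult2[OF A Q l])
  moreover have "row (transpose_mat Q) k = col Q k" using Q k by simp
  ultimately show ?thesis by simp
qed

lemma g_support:
  fixes Q T :: "real mat"
  assumes Q_carrier: "Q \<in> carrier_mat n (n - m)"
    and QT: "transpose_mat Q * T = 0\<^sub>m (n - m) m"
    and Q_band: "\<forall>i<n. \<forall>j<n - m. Q $$ (i,j) \<noteq> 0 \<longrightarrow> j \<le> i \<and> i \<le> j + m"
    and T_def: "T = mat n m (\<lambda>(i,j). u j (t i))"
    and t_mono: "\<forall>i. Suc i < n \<longrightarrow> t i < t (Suc i)"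
    and k: "k < n - m"
    and nz: "(\<Sum>i<n. Q $$ (i,k) * green m u Du (t i) v) \<noteq> 0"
  shows "t k < v \<and> v \<le> t (k + m)"
proof (rule ccontr)
  assume "\<not> (t k < v \<and> v \<le> t (k + m))"
  then consider "v \<le> t k" | "t (k + m) < v" by linarith
  then show False
  proof cases
    case 1
    have "(\<Sum>i<n. Q $$ (i,k) * green m u Du (t i) v)
        = (\<Sum>i<n. Q $$ (i,k) * (\<Sum>p<m. u p (t i) * ustar m Du p v))"
    proof (rule sum.cong[OF refl])
      fix i assume i: "i \<in> {..<n}"
      show "Q $$ (i,k) * green m u Du (t i) v = Q $$ (i,k) * (\<Sum>p<m. u p (t i) * ustar m Du p v)"
      proof (cases "Q $$ (i,k) = 0")
        case False
        then have "k \<le> i" using Q_band i k by auto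
        then have "t k \<le> t i" using t_le[OF t_mono _] i by auto
        then show ?thesis using 1 by (simp add: green_def)
      qed simp
    qed
    also have "\<dots> = (\<Sum>p<m. ustar m Du p v * (\<Sum>i<n. Q $$ (i,k) * u p (t i)))"
      by (simp add: sum_distrib_left sum_distrib_right ac_simps sum.swap[of _ "{..<n}"])
    also have "\<dots> = 0"
    proof (rule sum.neutral, rule ballI)
      fix p assume p: "p \<in> {..<m}"
      have "(transpose_mat Q * T) $$ (k,p) = (\<Sum>i<n. Q $$ (i,k) * u p (t i))"
        using Q_carrier k p T_def by (simp add: scalar_prod_def lessThan_atLeast0)
      then have "(\<Sum>i<n. Q $$ (i,k) * u p (t i)) = 0" using QT k p by simp
      then show "ustar m Du p v * (\<Sum>i<n. Q $$ (i,k) * u p (t i)) = 0" by simp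
    qed
    finally show False using nz by simp
  next
    case 2
    have "(\<Sum>i<n. Q $$ (i,k) * green m u Du (t i) v) = 0"
    proof (rule sum.neutral, rule ballI)
      fix i assume i: "i \<in> {..<n}"
      show "Q $$ (i,k) * green m u Du (t i) v = 0"
      proof (cases "Q $$ (i,k) = 0")
        case False
        then have "i \<le> k + m" using Q_band i k by auto
        then have "t i \<le> t (k + m)" using t_le[OF t_mono _] k by auto
        then show ?thesis using 2 by (simp add: green_def)
      qed simp
    qed
    then show False using nz by simp
  qed
qed



lemma mat_vec_smult:
  fixes A :: "real mat"
  assumes A: "A \<in> carrier_mat n n" and v: "v \<in> carrier_vec n"
  shows "A *\<^sub>v (s \<cdot>\<^sub>v v) = s \<cdot>\<^sub>v (A *\<^sub>v v)"
  by (rule eq_vecI, insert A v, auto)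

lemma psd_pd:
  fixes K :: "real mat"
  assumes K: "K \<in> carrier_mat n n" and st: "transpose_mat K = K"
    and psd: "\<And>x. x \<in> carrier_vec n \<Longrightarrow> x \<bullet> (K *\<^sub>v x) \<ge> 0"
    and dK: "det K \<noteq> 0"
    and x: "x \<in> carrier_vec n" and z: "x \<bullet> (K *\<^sub>v x) = 0"
  shows "x = 0\<^sub>v n"
proof -
  define y where "y = K *\<^sub>v x"
  have y: "y \<in> carrier_vec n" using K x unfolding y_def by simp
  define c where "c = y \<bullet> y"
  define d where "d = y \<bullet> (K *\<^sub>v y)"
  have c0: "c \<ge> 0" unfolding c_def by (rule self_scalar_nonneg)
  have d0: "d \<ge> 0" unfolding d_def using psd y by simp
  have q: "2 * s * c + s * s * d \<ge> 0" for s
  proof -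
    have sy: "s \<cdot>\<^sub>v y \<in> carrier_vec n" using y by simp
    have "0 \<le> (x + s \<cdot>\<^sub>v y) \<bullet> (K *\<^sub>v (x + s \<cdot>\<^sub>v y))" using psd x sy by simp
    also have "\<dots> = x \<bullet> (K *\<^sub>v x) + 2 * ((s \<cdot>\<^sub>v y) \<bullet> (K *\<^sub>v x)) + (s \<cdot>\<^sub>v y) \<bullet> (K *\<^sub>v (s \<cdot>\<^sub>v y))"
      by (rule quad_add[OF K st x sy])
    also have "(s \<cdot>\<^sub>v y) \<bullet> (K *\<^sub>v x) = s * c"
      unfolding y_def[symmetric] c_def using y by (rule smult_scalar_prod_distrib[OF _ y])
    also have "(s \<cdot>\<^sub>v y) \<bullet> (K *\<^sub>v (s \<cdot>\<^sub>v y)) = s * (s * d)"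
    proof -
      have Ky: "K *\<^sub>v y \<in> carrier_vec n" using K y by simp
      have "(s \<cdot>\<^sub>v y) \<bullet> (K *\<^sub>v (s \<cdot>\<^sub>v y)) = (s \<cdot>\<^sub>v y) \<bullet> (s \<cdot>\<^sub>v (K *\<^sub>v y))"
        using mat_vec_smult[OF K y] by simp
      also have "\<dots> = s * (y \<bullet> (s \<cdot>\<^sub>v (K *\<^sub>v y)))"
        by (rule smult_scalar_prod_distrib[OF y], insert Ky, simp)
      also have "y \<bullet> (s \<cdot>\<^sub>v (K *\<^sub>v y)) = s * d"
        unfolding d_def by (rule scalar_prod_smult_distrib[OF y Ky])
      finally show ?thesis .
    qed
    also have "x \<bullet> (K *\<^sub>v x) + 2 * (s * c) + s * (s * d) = 2 * s * c + s * s * d"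
      using z by simp
    finally show ?thesis .
  qed
  have "c = 0"
  proof (rule ccontr)
    assume "c \<noteq> 0"
    then have cp: "c > 0" using c0 by simp
    define s where "s = - c / (d + 1)"
    have ds: "(d + 1) * s = - c" using d0 unfolding s_def by simp
    have "(d + 1) * (d + 1) * (2 * s * c + s * s * d) = 2 * c * (d + 1) * ((d + 1) * s) + d * ((d + 1) * s) * ((d + 1) * s)"
      by (simp add: algebra_simps)
    also have "\<dots> = - (c * c * (d + 2))" unfolding ds by (simp add: algebra_simps)
    also have "\<dots> < 0" using cp d0 by simp
    finally have "(d + 1) * (d + 1) * (2 * s * c + s * s * d) < 0" .
    moreover have "(d + 1) * (d + 1) * (2 * s * c + s * s * d) \<ge> 0" using q[of s] d0 by simp
    ultimately show False by simp
  qed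
  then have "y = 0\<^sub>v n" using self_scalar_zero[OF y] unfolding c_def by simp
  then have Kx: "K *\<^sub>v x = 0\<^sub>v n" unfolding y_def .
  show ?thesis
  proof (rule ccontr)
    assume "x \<noteq> 0\<^sub>v n"
    then have "\<exists>v. v \<in> carrier_vec n \<and> v \<noteq> 0\<^sub>v n \<and> K *\<^sub>v v = 0\<^sub>v n" using x Kx by blast
    then show False using det_0_iff_vec_prod_zero_field[OF K] dK by simp
  qed
qed

lemma diag_form:
  fixes D :: "real mat"
  assumes D: "D \<in> carrier_mat n n" and dg: "diagonal_mat D" and pos: "\<forall>i<n. D $$ (i,i) > 0"
    and x: "x \<in> carrier_vec n"
  shows "x \<bullet> (D *\<^sub>v x) \<ge> 0" "x \<bullet> (D *\<^sub>v x) = 0 \<Longrightarrow> x = 0\<^sub>v n"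
proof -
  have "x \<bullet> (D *\<^sub>v x) = (\<Sum>i\<in>{0..<n}. x $ i * (D $$ (i,i) * x $ i))"
    unfolding diag_mult_vec[OF D dg x] scalar_prod_def by simp
  also have "\<dots> = (\<Sum>i\<in>{0..<n}. D $$ (i,i) * (x $ i * x $ i))"
    by (rule sum.cong[OF refl]) (simp only: mult.left_commute)
  finally have e: "x \<bullet> (D *\<^sub>v x) = (\<Sum>i\<in>{0..<n}. D $$ (i,i) * (x $ i * x $ i))" .
  have nn: "\<And>i. i \<in> {0..<n} \<Longrightarrow> D $$ (i,i) * (x $ i * x $ i) \<ge> 0" using pos by auto
  show "x \<bullet> (D *\<^sub>v x) \<ge> 0" unfolding e by (rule sum_nonneg) (rule nn)
  assume "x \<bullet> (D *\<^sub>v x) = 0"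
  then have z: "(\<Sum>i\<in>{0..<n}. D $$ (i,i) * (x $ i * x $ i)) = 0" unfolding e .
  have "\<forall>i\<in>{0..<n}. D $$ (i,i) * (x $ i * x $ i) = 0"
    using z sum_nonneg_eq_0_iff[of "{0..<n}" "\<lambda>i. D $$ (i,i) * (x $ i * x $ i)"] nn by simp
  then have "\<And>i. i < n \<Longrightarrow> x $ i = 0" using pos by (metis atLeastLessThan_iff le0 less_irrefl mult_eq_0_iff)
  then show "x = 0\<^sub>v n" using x by (intro eq_vecI) auto
qed

lemma gram_zero:
  fixes Q :: "real mat"
  assumes Q: "Q \<in> carrier_mat n r" and z: "z \<in> carrier_vec r"
  shows "z \<bullet> (transpose_mat Q *\<^sub>v (Q *\<^sub>v z)) = (Q *\<^sub>v z) \<bullet> (Q *\<^sub>v z)"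
proof -
  have "(transpose_mat Q *\<^sub>v (Q *\<^sub>v z)) \<bullet> z = (Q *\<^sub>v z) \<bullet> (Q *\<^sub>v z)"
    by (rule transpose_vec_mult_scalar[OF Q z], insert Q z, simp)
  then show ?thesis using comm_scalar_prod[of z r "transpose_mat Q *\<^sub>v (Q *\<^sub>v z)"] Q z by simp
qed

lemma congruence_form:
  fixes Q M :: "real mat"
  assumes Q: "Q \<in> carrier_mat n r" and M: "M \<in> carrier_mat n n" and z: "z \<in> carrier_vec r"
  shows "z \<bullet> ((transpose_mat Q * M * Q) *\<^sub>v z) = (Q *\<^sub>v z) \<bullet> (M *\<^sub>v (Q *\<^sub>v z))"
proof -
  have "(transpose_mat Q * M * Q) *\<^sub>v z = (transpose_mat Q * M) *\<^sub>v (Q *\<^sub>v z)"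
    by (rule assoc_mult_mat_vec[of _ r n], insert Q M z, auto)
  also have "\<dots> = transpose_mat Q *\<^sub>v (M *\<^sub>v (Q *\<^sub>v z))"
    by (rule assoc_mult_mat_vec[of _ r n], insert Q M z, auto)
  finally have "(transpose_mat Q * M * Q) *\<^sub>v z = transpose_mat Q *\<^sub>v (M *\<^sub>v (Q *\<^sub>v z))" .
  moreover have "(transpose_mat Q *\<^sub>v (M *\<^sub>v (Q *\<^sub>v z))) \<bullet> z = (M *\<^sub>v (Q *\<^sub>v z)) \<bullet> (Q *\<^sub>v z)"
    by (rule transpose_vec_mult_scalar[OF Q z], insert Q M z, simp)
  moreover have "z \<bullet> (transpose_mat Q *\<^sub>v (M *\<^sub>v (Q *\<^sub>v z))) = (transpose_mat Q *\<^sub>v (M *\<^sub>v (Q *\<^sub>v z))) \<bullet> z"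
    by (rule comm_scalar_prod[of _ r], insert Q M z, auto)
  moreover have "(M *\<^sub>v (Q *\<^sub>v z)) \<bullet> (Q *\<^sub>v z) = (Q *\<^sub>v z) \<bullet> (M *\<^sub>v (Q *\<^sub>v z))"
    by (rule comm_scalar_prod[of _ n], insert Q M z, auto)
  ultimately show ?thesis by simp
qed



context vec_space begin
lemma full_rank_ker:
  assumes A: "A \<in> carrier_mat n nc" and r: "rank A = nc"
    and v: "v \<in> carrier_vec nc" and Av: "A *\<^sub>v v = 0\<^sub>v n"
  shows "v = 0\<^sub>v nc"
proof (rule ccontr)
  assume nz: "v \<noteq> 0\<^sub>v nc"
  show False
  proof (cases "distinct (cols A)")
    case True
    then have "lin_indpt (set (cols A))" using full_rank_lin_indpt A r by auto
    then show False using lin_depI[OF A v nz Av] True by blast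
  next
    case False
    obtain S where S: "maximal S (\<lambda>T. T \<subseteq> set (cols A) \<and> lin_indpt T)"
      using maximal_exists[of "(\<lambda>T. T \<subseteq> set (cols A) \<and> lin_indpt T)" "card (set (cols A))" "{}"]
      by (meson List.finite_set card_mono empty_iff empty_subsetI finite_lin_indpt2 rev_finite_subset)
    then have "card S \<le> card (set (cols A))" by (simp add: card_mono maximal_def)
    then have "card S < nc"
      using A cols_length card_length False card_distinct carrier_matD(2) nat_less_le
      by (metis dual_order.antisym dual_order.trans)
    then show False using rank_card_indpt[OF A S] r by simp
  qed
qed
end


lemma mat_vec_zero:
  fixes A :: "real mat"
  assumes A: "A \<in> carrier_mat nr nc"
  shows "A *\<^sub>v 0\<^sub>v nc = 0\<^sub>v nr"
proof (rule eq_vecI)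
  fix i assume "i < dim_vec (0\<^sub>v nr :: real vec)"
  then have i: "i < nr" by simp
  have "row A i \<bullet> 0\<^sub>v nc = 0" by (rule scalar_prod_right_zero, insert A i, auto)
  then show "(A *\<^sub>v 0\<^sub>v nc) $ i = 0\<^sub>v nr $ i" using A i by simp
qed (insert A, simp)

lemma qtq_ker:
  fixes Q :: "real mat"
  assumes Q: "Q \<in> carrier_mat n r" and rk: "vec_space.rank n Q = r"
    and d: "d \<in> carrier_vec r" and z: "transpose_mat Q *\<^sub>v (Q *\<^sub>v d) = 0\<^sub>v r"
  shows "d = 0\<^sub>v r"
proof -
  have "(Q *\<^sub>v d) \<bullet> (Q *\<^sub>v d) = 0" using gram_zero[OF Q d] z d by simp
  then have "Q *\<^sub>v d = 0\<^sub>v n" using self_scalar_zero[of "Q *\<^sub>v d" n] Q d by simp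
  then show ?thesis using vec_space.full_rank_ker[OF Q rk d] by simp
qed

lemma colspace:
  fixes T Q :: "real mat"
  assumes Tc: "T \<in> carrier_mat n m" and Qc: "Q \<in> carrier_mat n (n - m)" and nm: "m \<le> n"
    and T_rank: "vec_space.rank n T = m" and Q_rank: "vec_space.rank n Q = n - m"
    and QT: "transpose_mat Q * T = 0\<^sub>m (n - m) m"
    and z: "z \<in> carrier_vec n" and Qz: "transpose_mat Q *\<^sub>v z = 0\<^sub>v (n - m)"
  shows "\<exists>c \<in> carrier_vec m. z = T *\<^sub>v c"
proof -
  define S where "S = mat n n (\<lambda>(i,j). if j < m then T $$ (i,j) else Q $$ (i, j - m))"
  have Sc: "S \<in> carrier_mat n n" unfolding S_def by simp
  define cp where "cp = (\<lambda>v :: real vec. vec m (\<lambda>j. v $ j))"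
  define dp where "dp = (\<lambda>v :: real vec. vec (n - m) (\<lambda>j. v $ (j + m)))"
  have QtT: "transpose_mat Q *\<^sub>v (T *\<^sub>v c) = 0\<^sub>v (n - m)" if c: "c \<in> carrier_vec m" for c
  proof -
    have "transpose_mat Q *\<^sub>v (T *\<^sub>v c) = (transpose_mat Q * T) *\<^sub>v c"
      by (rule assoc_mult_mat_vec[symmetric, of _ "n - m" n], insert Qc Tc c, auto)
    then show ?thesis using QT c by (simp, intro eq_vecI, auto)
  qed
  have split: "S *\<^sub>v v = T *\<^sub>v cp v + Q *\<^sub>v dp v" if v: "v \<in> carrier_vec n" for v
  proof (rule eq_vecI)
    fix i assume "i < dim_vec (T *\<^sub>v cp v + Q *\<^sub>v dp v)"
    then have i: "i < n" using Tc Qc by simp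
    have "(S *\<^sub>v v) $ i = (\<Sum>j\<in>{0..<n}. S $$ (i,j) * v $ j)"
      using Sc i v by (simp add: scalar_prod_def)
    also have "\<dots> = (\<Sum>j\<in>{0..<m}. S $$ (i,j) * v $ j) + (\<Sum>j\<in>{m..<n}. S $$ (i,j) * v $ j)"
      using sum.atLeastLessThan_concat[of 0 m n "\<lambda>j. S $$ (i,j) * v $ j"] nm by simp
    also have "(\<Sum>j\<in>{m..<n}. S $$ (i,j) * v $ j) = (\<Sum>j\<in>{0..<n-m}. S $$ (i,j+m) * v $ (j+m))"
      using sum.shift_bounds_nat_ivl[of "\<lambda>j. S $$ (i,j) * v $ j" 0 m "n - m"] nm by simp
    also have "(\<Sum>j\<in>{0..<m}. S $$ (i,j) * v $ j) = (\<Sum>j\<in>{0..<m}. T $$ (i,j) * v $ j)"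
      by (rule sum.cong[OF refl], insert i nm, auto simp: S_def)
    also have "(\<Sum>j\<in>{0..<n-m}. S $$ (i,j+m) * v $ (j+m)) = (\<Sum>j\<in>{0..<n-m}. Q $$ (i,j) * v $ (j+m))"
      by (rule sum.cong[OF refl], insert i nm, auto simp: S_def)
    finally show "(S *\<^sub>v v) $ i = (T *\<^sub>v cp v + Q *\<^sub>v dp v) $ i"
      using i Tc Qc by (simp add: scalar_prod_def cp_def dp_def)
  qed (insert Sc Tc Qc, auto)
  have cpc: "cp v \<in> carrier_vec m" and dpc: "dp v \<in> carrier_vec (n - m)" for v
    unfolding cp_def dp_def by auto
  have Sker: "v = 0\<^sub>v n" if v: "v \<in> carrier_vec n" and Sv: "S *\<^sub>v v = 0\<^sub>v n" for v
  proof -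
    let ?c = "cp v" and ?d = "dp v"
    have Tcv: "T *\<^sub>v ?c \<in> carrier_vec n" and Qdv: "Q *\<^sub>v ?d \<in> carrier_vec n" using Tc Qc by (auto simp: cp_def dp_def)
    have e: "T *\<^sub>v ?c + Q *\<^sub>v ?d = 0\<^sub>v n" using split[OF v] Sv by simp
    have QTc: "transpose_mat Q \<in> carrier_mat (n - m) n" using Qc by simp
    have eq1: "transpose_mat Q *\<^sub>v (T *\<^sub>v ?c + Q *\<^sub>v ?d) = transpose_mat Q *\<^sub>v (T *\<^sub>v ?c) + transpose_mat Q *\<^sub>v (Q *\<^sub>v ?d)"
      by (rule mult_add_distrib_mat_vec[OF QTc Tcv Qdv])
    have z0: "transpose_mat Q *\<^sub>v (0\<^sub>v n) = 0\<^sub>v (n - m)" by (rule mat_vec_zero[OF QTc])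
    have Xc: "transpose_mat Q *\<^sub>v (Q *\<^sub>v ?d) \<in> carrier_vec (n - m)" by (rule mult_mat_vec_carrier[OF QTc Qdv])
    have "transpose_mat Q *\<^sub>v (Q *\<^sub>v ?d) = 0\<^sub>v (n - m) + transpose_mat Q *\<^sub>v (Q *\<^sub>v ?d)"
      using left_zero_vec[OF Xc] by simp
    also have "\<dots> = transpose_mat Q *\<^sub>v (T *\<^sub>v ?c) + transpose_mat Q *\<^sub>v (Q *\<^sub>v ?d)"
      unfolding QtT[OF cpc] ..
    also have "\<dots> = 0\<^sub>v (n - m)" unfolding eq1[symmetric] e z0 ..
    finally have "transpose_mat Q *\<^sub>v (Q *\<^sub>v ?d) = 0\<^sub>v (n - m)" .
    then have d0: "?d = 0\<^sub>v (n - m)" using qtq_ker[OF Qc Q_rank dpc] by simp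
    then have "Q *\<^sub>v ?d = 0\<^sub>v n" using mat_vec_zero[OF Qc] by simp
    then have "T *\<^sub>v ?c = 0\<^sub>v n" using e right_zero_vec[OF Tcv] by simp
    then have c0: "?c = 0\<^sub>v m" using vec_space.full_rank_ker[OF Tc T_rank cpc] by simp
    show "v = 0\<^sub>v n"
    proof (rule eq_vecI)
      fix j assume "j < dim_vec (0\<^sub>v n :: real vec)"
      then have j: "j < n" by simp
      show "v $ j = 0\<^sub>v n $ j"
      proof (cases "j < m")
        case True
        have "v $ j = cp v $ j" using True unfolding cp_def by simp
        also have "\<dots> = 0" using c0 True by simp
        finally show ?thesis using j by simp
      next
        case False
        then have "j - m < n - m" "j - m + m = j" using j by auto
        then have "v $ j = dp v $ (j - m)" unfolding dp_def by simp
        also have "\<dots> = 0" using d0 \<open>j - m < n - m\<close> by simp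
        finally show ?thesis using j by simp
      qed
    qed (insert v, simp)
  qed
  have dS: "det S \<noteq> 0" by (rule det_nz_ker[OF Sc Sker])
  note Sp = minv_props[OF Sc dS]
  define v where "v = minv S *\<^sub>v z"
  have v: "v \<in> carrier_vec n" using Sp z unfolding v_def by simp
  have "S *\<^sub>v v = (S * minv S) *\<^sub>v z" unfolding v_def
    by (rule assoc_mult_mat_vec[symmetric], insert Sc Sp z, auto)
  then have zS: "z = T *\<^sub>v cp v + Q *\<^sub>v dp v" using Sp z split[OF v] by simp
  have Tcv: "T *\<^sub>v cp v \<in> carrier_vec n" and Qdv: "Q *\<^sub>v dp v \<in> carrier_vec n" using Tc Qc cpc dpc by auto
  have QTc: "transpose_mat Q \<in> carrier_mat (n - m) n" using Qc by simp
  have eq2: "transpose_mat Q *\<^sub>v z = transpose_mat Q *\<^sub>v (T *\<^sub>v cp v) + transpose_mat Q *\<^sub>v (Q *\<^sub>v dp v)"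
    unfolding zS by (rule mult_add_distrib_mat_vec[OF QTc Tcv Qdv])
  have Xc: "transpose_mat Q *\<^sub>v (Q *\<^sub>v dp v) \<in> carrier_vec (n - m)" by (rule mult_mat_vec_carrier[OF QTc Qdv])
  have "transpose_mat Q *\<^sub>v (Q *\<^sub>v dp v) = 0\<^sub>v (n - m) + transpose_mat Q *\<^sub>v (Q *\<^sub>v dp v)"
    using left_zero_vec[OF Xc] by simp
  also have "\<dots> = transpose_mat Q *\<^sub>v (T *\<^sub>v cp v) + transpose_mat Q *\<^sub>v (Q *\<^sub>v dp v)"
    unfolding QtT[OF cpc] ..
  also have "\<dots> = 0\<^sub>v (n - m)" unfolding eq2[symmetric] Qz ..
  finally have "transpose_mat Q *\<^sub>v (Q *\<^sub>v dp v) = 0\<^sub>v (n - m)" .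
  then have "dp v = 0\<^sub>v (n - m)" using qtq_ker[OF Qc Q_rank dpc] by simp
  then have "Q *\<^sub>v dp v = 0\<^sub>v n" using mat_vec_zero[OF Qc] by simp
  then have "z = T *\<^sub>v cp v" using zS right_zero_vec[OF Tcv] by simp
  then show ?thesis using cpc by blast
qed



lemma zero_mat_vec:
  fixes w :: "real vec"
  assumes w: "w \<in> carrier_vec nc"
  shows "0\<^sub>m nr nc *\<^sub>v w = 0\<^sub>v nr"
proof (rule eq_vecI)
  fix i assume "i < dim_vec (0\<^sub>v nr :: real vec)"
  then have i: "i < nr" by simp
  have "row (0\<^sub>m nr nc) i = 0\<^sub>v nc" using i by (intro eq_vecI) auto
  then show "(0\<^sub>m nr nc *\<^sub>v w) $ i = 0\<^sub>v nr $ i" using i w by simp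
qed simp

lemma congr_mv:
  fixes Q M :: "real mat"
  assumes Q: "Q \<in> carrier_mat n r" and M: "M \<in> carrier_mat n n" and z: "z \<in> carrier_vec r"
  shows "(transpose_mat Q * M * Q) *\<^sub>v z = transpose_mat Q *\<^sub>v (M *\<^sub>v (Q *\<^sub>v z))"
proof -
  have QT: "transpose_mat Q \<in> carrier_mat r n" using Q by simp
  have QM: "transpose_mat Q * M \<in> carrier_mat r n" using QT M by simp
  have "(transpose_mat Q * M * Q) *\<^sub>v z = (transpose_mat Q * M) *\<^sub>v (Q *\<^sub>v z)"
    by (rule assoc_mult_mat_vec[OF QM Q z])
  also have "\<dots> = transpose_mat Q *\<^sub>v (M *\<^sub>v (Q *\<^sub>v z))"
    by (rule assoc_mult_mat_vec[OF QT M], rule mult_mat_vec_carrier[OF Q z])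
  finally show ?thesis .
qed

lemma diag_entry_sum:
  fixes D E :: "real mat"
  assumes D: "D \<in> carrier_mat n n" and dg: "diagonal_mat D" and E: "E \<in> carrier_mat n n"
    and i: "i < n" and j: "j < n"
  shows "(D * E) $$ (i,j) = D $$ (i,i) * E $$ (i,j)"
proof -
  have "(D * E) $$ (i,j) = (\<Sum>k\<in>{0..<n}. D $$ (i,k) * E $$ (k,j))"
    using D E i j by (simp add: scalar_prod_def)
  also have "\<dots> = (\<Sum>k\<in>{0..<n}. if k = i then D $$ (i,i) * E $$ (i,j) else 0)"
    by (rule sum.cong[OF refl], insert dg D i, auto simp: diagonal_mat_def)
  also have "\<dots> = D $$ (i,i) * E $$ (i,j)" using i by simp
  finally show ?thesis .
qed

lemma diag_sym:
  fixes D :: "real mat"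
  assumes D: "D \<in> carrier_mat n n" and dg: "diagonal_mat D"
  shows "transpose_mat D = D"
proof (rule eq_matI)
  fix i j assume i: "i < dim_row D" and j: "j < dim_col D"
  show "transpose_mat D $$ (i,j) = D $$ (i,j)"
  proof (cases "i = j")
    case False
    then show ?thesis using i j D dg unfolding diagonal_mat_def by auto
  qed (insert i j D, simp)
qed (insert D, auto)

theorem mainTheorem11:
  fixes a b lam :: real and m n :: nat
    and w :: "nat \<Rightarrow> real \<Rightarrow> real"
    and u :: "nat \<Rightarrow> real \<Rightarrow> real" and Du :: "nat \<Rightarrow> nat \<Rightarrow> real \<Rightarrow> real"
    and t :: "nat \<Rightarrow> real"
    and T K D Q :: "real mat" and Y :: "real vec"
  assumes ab: "a < b" and m1: "1 \<le> m"
    and w_cont: "\<forall>j<m. continuous_on {a..b} (w j)"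
    and basis: "is_ker_basis a b m w u Du"
    and W_inv: "\<forall>x\<in>{a..b}. invertible_mat (wronskian m Du x)"
    and nm: "n > m"
    and t_lo: "a < t 0" and t_mono: "\<forall>i. Suc i < n \<longrightarrow> t i < t (Suc i)" and t_hi: "t (n - 1) < b"
    and T_def: "T = mat n m (\<lambda>(i,j). u j (t i))"
    and T_rank: "vec_space.rank n T = m"
    and K_def: "K = mat n n (\<lambda>(i,j). R1 a b m u Du (t i) (t j))"
    and K_inv: "invertible_mat K"
    and D_carrier: "D \<in> carrier_mat n n" and D_diag: "diagonal_mat D"
    and D_pos: "\<forall>i<n. D $$ (i,i) > 0"
    and lam: "lam > 0"
    and Q_carrier: "Q \<in> carrier_mat n (n - m)"
    and Q_rank: "vec_space.rank n Q = n - m"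
    and QT: "transpose_mat Q * T = 0\<^sub>m (n - m) m"
    and Q_band: "\<forall>i<n. \<forall>j<n - m. Q $$ (i,j) \<noteq> 0 \<longrightarrow> j \<le> i \<and> i \<le> j + m"
    and Y: "Y \<in> carrier_vec n"
  shows
    "(let M = K + lam \<cdot>\<^sub>m minv D in
      (\<forall>k<n - m. \<forall>l<n - m. (k > l + m \<or> l > k + m) \<longrightarrow>
          (transpose_mat Q * M * Q) $$ (k,l) = 0 \<and>
          (transpose_mat Q * K * Q) $$ (k,l) = 0 \<and>
          (transpose_mat Q * minv D * Q) $$ (k,l) = 0) \<and>
      (\<exists>!p. is_ridge_minimizer n m Y T K D lam p) \<and>
      (\<forall>\<alpha> \<beta>. is_ridge_minimizer n m Y T K D lam (\<alpha>, \<beta>) \<longrightarrow>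
          transpose_mat T *\<^sub>v \<beta> = 0\<^sub>v m \<and>
          \<beta> = Q * minv (transpose_mat Q * M * Q) * transpose_mat Q *\<^sub>v Y \<and>
          \<alpha> = minv (transpose_mat T * T) * transpose_mat T *\<^sub>v (Y - M *\<^sub>v \<beta>) \<and>
          T *\<^sub>v \<alpha> + K *\<^sub>v \<beta> = Y - lam \<cdot>\<^sub>v (minv D *\<^sub>v \<beta>)))"
proof -
  have Tc: "T \<in> carrier_mat n m" unfolding T_def by simp
  have Kc: "K \<in> carrier_mat n n" unfolding K_def by simp
  have Qc: "Q \<in> carrier_mat n (n - m)" by (rule Q_carrier)
  have QTc: "transpose_mat Q \<in> carrier_mat (n - m) n" using Qc by simp
  have TTc: "transpose_mat T \<in> carrier_mat m n" using Tc by simp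
  define E where "E = mat n n (\<lambda>(i,j). if i = j then 1 / D $$ (i,i) else 0)"
  have Ec: "E \<in> carrier_mat n n" unfolding E_def by simp
  have E_diag: "diagonal_mat E" unfolding diagonal_mat_def E_def by simp
  have E_pos: "\<forall>i<n. E $$ (i,i) > 0" using D_pos unfolding E_def by simp
  have detD: "det D \<noteq> 0"
  proof (rule det_nz_ker[OF D_carrier])
    fix v :: "real vec" assume v: "v \<in> carrier_vec n" and Dv: "D *\<^sub>v v = 0\<^sub>v n"
    have "v \<bullet> (D *\<^sub>v v) = 0" using Dv v by simp
    then show "v = 0\<^sub>v n" using diag_form(2)[OF D_carrier D_diag D_pos v] by simp
  qed
  have DE: "D * E = 1\<^sub>m n"
  proof (rule eq_matI)
    fix i j assume i: "i < dim_row (1\<^sub>m n :: real mat)" and j: "j < dim_col (1\<^sub>m n :: real mat)"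
    then have i: "i < n" and j: "j < n" by auto
    have "(D * E) $$ (i,j) = D $$ (i,i) * E $$ (i,j)" by (rule diag_entry_sum[OF D_carrier D_diag Ec i j])
    also have "\<dots> = 1\<^sub>m n $$ (i,j)" using i j D_pos unfolding E_def by auto
    finally show "(D * E) $$ (i,j) = 1\<^sub>m n $$ (i,j)" .
  qed (insert D_carrier Ec, auto)
  have minvD: "minv D = E" by (rule minv_unique[OF D_carrier detD Ec DE])
  define M where "M = K + lam \<cdot>\<^sub>m E"
  have Mc: "M \<in> carrier_mat n n" unfolding M_def using Kc Ec by simp
  have Mv: "M *\<^sub>v v = K *\<^sub>v v + lam \<cdot>\<^sub>v (E *\<^sub>v v)" if v: "v \<in> carrier_vec n" for v
  proof -
    have "M *\<^sub>v v = K *\<^sub>v v + (lam \<cdot>\<^sub>m E) *\<^sub>v v"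
      unfolding M_def by (rule add_mult_distrib_mat_vec[OF Kc _ v], insert Ec, simp)
    also have "(lam \<cdot>\<^sub>m E) *\<^sub>v v = lam \<cdot>\<^sub>v (E *\<^sub>v v)" by (rule smult_mat_vec[OF Ec v])
    finally show ?thesis .
  qed
  have Mform: "x \<bullet> (M *\<^sub>v y) = x \<bullet> (K *\<^sub>v y) + lam * (x \<bullet> (E *\<^sub>v y))"
    if x: "x \<in> carrier_vec n" and y: "y \<in> carrier_vec n" for x y
  proof -
    have Ky: "K *\<^sub>v y \<in> carrier_vec n" and Ey: "E *\<^sub>v y \<in> carrier_vec n"
      using Kc Ec y by auto
    have "x \<bullet> (M *\<^sub>v y) = x \<bullet> (K *\<^sub>v y) + x \<bullet> (lam \<cdot>\<^sub>v (E *\<^sub>v y))"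
      unfolding Mv[OF y] by (rule scalar_prod_add_distrib[OF x Ky], insert Ey, simp)
    also have "x \<bullet> (lam \<cdot>\<^sub>v (E *\<^sub>v y)) = lam * (x \<bullet> (E *\<^sub>v y))"
      by (rule scalar_prod_smult_distrib[OF x Ey])
    finally show ?thesis .
  qed
  have K_sym: "transpose_mat K = K"
    by (rule eq_matI, insert Kc, auto simp: K_def R1_def mult.commute)
  have D_sym: "transpose_mat D = D" by (rule diag_sym[OF D_carrier D_diag])
  have E_sym: "transpose_mat E = E" by (rule diag_sym[OF Ec E_diag])
  have K_psd: "x \<bullet> (K *\<^sub>v x) \<ge> 0" if x: "x \<in> carrier_vec n" for x
  proof -
    let ?g = "\<lambda>v. (\<Sum>i<n. x $ i * green m u Du (t i) v)"
    have e: "x \<bullet> (K *\<^sub>v x) = integral {a..b} (\<lambda>v. ?g v * ?g v)"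
      by (rule Kform[OF basis m1 W_inv K_def x x])
    show ?thesis
    proof (cases "(\<lambda>v. ?g v * ?g v) integrable_on {a..b}")
      case True
      then show ?thesis unfolding e by (rule integral_nonneg) simp
    next
      case False
      show ?thesis unfolding e not_integrable_integral[OF False] by simp
    qed
  qed
  have detK: "det K \<noteq> 0" by (rule invertible_det_nz[OF Kc K_inv])
  have K_pd: "x = 0\<^sub>v n" if x: "x \<in> carrier_vec n" and z: "x \<bullet> (K *\<^sub>v x) = 0" for x
    by (rule psd_pd[OF Kc K_sym K_psd detK x z])
  have M_pd: "x = 0\<^sub>v n" if x: "x \<in> carrier_vec n" and z: "x \<bullet> (M *\<^sub>v x) = 0" for x
  proof -
    have "x \<bullet> (K *\<^sub>v x) \<ge> 0" by (rule K_psd[OF x])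
    moreover have "x \<bullet> (E *\<^sub>v x) \<ge> 0" by (rule diag_form(1)[OF Ec E_diag E_pos x])
    moreover have "x \<bullet> (K *\<^sub>v x) + lam * (x \<bullet> (E *\<^sub>v x)) = 0" using z Mform[OF x x] by simp
    ultimately have "x \<bullet> (E *\<^sub>v x) = 0" using lam
      by (smt (verit) mult_pos_pos)
    then show ?thesis by (rule diag_form(2)[OF Ec E_diag E_pos x])
  qed
  define A where "A = transpose_mat Q * M * Q"
  have Ac: "A \<in> carrier_mat (n - m) (n - m)" unfolding A_def using Qc Mc by simp
  have detA: "det A \<noteq> 0"
  proof (rule det_nz_ker[OF Ac])
    fix z :: "real vec" assume z: "z \<in> carrier_vec (n - m)" and Az: "A *\<^sub>v z = 0\<^sub>v (n - m)"
    have "(Q *\<^sub>v z) \<bullet> (M *\<^sub>v (Q *\<^sub>v z)) = z \<bullet> (A *\<^sub>v z)"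
      unfolding A_def by (rule congruence_form[OF Qc Mc z, symmetric])
    also have "\<dots> = 0" unfolding Az using z by simp
    finally have "Q *\<^sub>v z = 0\<^sub>v n" by (rule M_pd[rotated], insert Qc z, simp)
    then show "z = 0\<^sub>v (n - m)" by (rule vec_space.full_rank_ker[OF Qc Q_rank z])
  qed
  note Ap = minv_props[OF Ac detA]
  define TT where "TT = transpose_mat T * T"
  have TTmc: "TT \<in> carrier_mat m m" unfolding TT_def using Tc by simp
  have detTT: "det TT \<noteq> 0"
  proof (rule det_nz_ker[OF TTmc])
    fix c :: "real vec" assume c: "c \<in> carrier_vec m" and TTz: "TT *\<^sub>v c = 0\<^sub>v m"
    have "TT *\<^sub>v c = transpose_mat T *\<^sub>v (T *\<^sub>v c)" unfolding TT_def
      by (rule assoc_mult_mat_vec[OF TTc Tc c])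
    then have "c \<bullet> (transpose_mat T *\<^sub>v (T *\<^sub>v c)) = c \<bullet> 0\<^sub>v m" using TTz by simp
    then have "c \<bullet> (transpose_mat T *\<^sub>v (T *\<^sub>v c)) = 0" using scalar_prod_right_zero[OF c] by simp
    then have "(T *\<^sub>v c) \<bullet> (T *\<^sub>v c) = 0" using gram_zero[OF Tc c] by simp
    then have "T *\<^sub>v c = 0\<^sub>v n" by (rule self_scalar_zero[rotated], insert Tc c, simp)
    then show "c = 0\<^sub>v m" by (rule vec_space.full_rank_ker[OF Tc T_rank c])
  qed
  note TTp = minv_props[OF TTmc detTT]
  have band: "(transpose_mat Q * M * Q) $$ (k,l) = 0 \<and> (transpose_mat Q * K * Q) $$ (k,l) = 0 \<and>
      (transpose_mat Q * E * Q) $$ (k,l) = 0"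
    if k: "k < n - m" and l: "l < n - m" and kl: "k > l + m \<or> l > k + m" for k l
  proof -
    have cQk: "col Q k \<in> carrier_vec n" and cQl: "col Q l \<in> carrier_vec n" using Qc k l by auto
    let ?g = "\<lambda>k v. (\<Sum>i<n. Q $$ (i,k) * green m u Du (t i) v)"
    have gcol: "(\<Sum>i<n. col Q k $ i * green m u Du (t i) v) = ?g k v" if k: "k < n - m" for k v
      by (rule sum.cong[OF refl], insert Qc k, auto)
    have zero: "?g k v * ?g l v = 0" for v
    proof (rule ccontr)
      assume "?g k v * ?g l v \<noteq> 0"
      then have "?g k v \<noteq> 0" "?g l v \<noteq> 0" by auto
      then have sk: "t k < v \<and> v \<le> t (k + m)" and sl: "t l < v \<and> v \<le> t (l + m)"
        using g_support[OF Qc QT Q_band T_def t_mono k] g_support[OF Qc QT Q_band T_def t_mono l] by auto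
      from kl show False
      proof
        assume "k > l + m"
        then have "t (l + m) < t k" using t_strict[OF t_mono _, of "l + m" k] k by simp
        then show False using sk sl by simp
      next
        assume "l > k + m"
        then have "t (k + m) < t l" using t_strict[OF t_mono _, of "k + m" l] l by simp
        then show False using sk sl by simp
      qed
    qed
    have hK: "col Q k \<bullet> (K *\<^sub>v col Q l) = 0"
    proof -
      have "col Q k \<bullet> (K *\<^sub>v col Q l) = integral {a..b} (\<lambda>v. ?g k v * ?g l v)"
        using Kform[OF basis m1 W_inv K_def cQk cQl] gcol[OF k] gcol[OF l] by simp
      also have "\<dots> = 0" unfolding zero by simp
      finally show ?thesis .
    qed
    have hE: "col Q k \<bullet> (E *\<^sub>v col Q l) = 0"
    proof -
      have "col Q k \<bullet> (E *\<^sub>v col Q l) = (\<Sum>i\<in>{0..<n}. Q $$ (i,k) * (E $$ (i,i) * Q $$ (i,l)))"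
        unfolding diag_mult_vec[OF Ec E_diag cQl] scalar_prod_def using Qc k l by simp
      also have "\<dots> = 0"
      proof (rule sum.neutral, rule ballI)
        fix i assume i: "i \<in> {0..<n}"
        show "Q $$ (i,k) * (E $$ (i,i) * Q $$ (i,l)) = 0"
        proof (rule ccontr)
          assume "Q $$ (i,k) * (E $$ (i,i) * Q $$ (i,l)) \<noteq> 0"
          then have "Q $$ (i,k) \<noteq> 0" "Q $$ (i,l) \<noteq> 0" by auto
          then have "k \<le> i \<and> i \<le> k + m" "l \<le> i \<and> i \<le> l + m" using Q_band i k l by auto
          then show False using kl by linarith
        qed
      qed
      finally show ?thesis .
    qed
    have hM: "col Q k \<bullet> (M *\<^sub>v col Q l) = 0" using Mform[OF cQk cQl] hK hE by simp
    show ?thesis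
      using QAQ_entry[OF Mc Qc k l] QAQ_entry[OF Kc Qc k l] QAQ_entry[OF Ec Qc k l] hK hE hM by simp
  qed
  note dims = carrier_matD[OF Ec] carrier_matD[OF Kc] carrier_matD[OF Tc] carrier_matD[OF Mc] carrier_matD[OF D_carrier] carrier_matD[OF Qc]
  define \<beta>0 where "\<beta>0 = Q *\<^sub>v (minv A *\<^sub>v (transpose_mat Q *\<^sub>v Y))"
  have QtY: "transpose_mat Q *\<^sub>v Y \<in> carrier_vec (n - m)" using QTc Y by simp
  have wc: "minv A *\<^sub>v (transpose_mat Q *\<^sub>v Y) \<in> carrier_vec (n - m)" using Ap(1) QtY by simp
  have b0c: "\<beta>0 \<in> carrier_vec n" unfolding \<beta>0_def using Qc wc by simp
  define z where "z = Y - M *\<^sub>v \<beta>0"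
  have zc: "z \<in> carrier_vec n" unfolding z_def using Y Mc b0c by simp
  define \<alpha>0 where "\<alpha>0 = minv TT *\<^sub>v (transpose_mat T *\<^sub>v z)"
  have a0c: "\<alpha>0 \<in> carrier_vec m" unfolding \<alpha>0_def using TTp(1) TTc zc by simp
  have F1: "transpose_mat T *\<^sub>v \<beta>0 = 0\<^sub>v m"
  proof -
    have "transpose_mat T *\<^sub>v \<beta>0 = (transpose_mat T * Q) *\<^sub>v (minv A *\<^sub>v (transpose_mat Q *\<^sub>v Y))"
      unfolding \<beta>0_def by (rule assoc_mult_mat_vec[symmetric, OF TTc Qc wc])
    also have "transpose_mat T * Q = transpose_mat (transpose_mat Q * T)"
      using transpose_mult[OF QTc Tc] by simp
    also have "\<dots> = 0\<^sub>m m (n - m)" unfolding QT by simp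
    also have "0\<^sub>m m (n - m) *\<^sub>v (minv A *\<^sub>v (transpose_mat Q *\<^sub>v Y)) = 0\<^sub>v m"
      by (rule zero_mat_vec[OF wc])
    finally show ?thesis .
  qed
  have F2: "transpose_mat Q *\<^sub>v z = 0\<^sub>v (n - m)"
  proof -
    have Mb: "M *\<^sub>v \<beta>0 \<in> carrier_vec n" using Mc b0c by simp
    have cg: "\<And>w. w \<in> carrier_vec (n - m) \<Longrightarrow> A *\<^sub>v w = transpose_mat Q *\<^sub>v (M *\<^sub>v (Q *\<^sub>v w))"
      unfolding A_def by (rule congr_mv[OF Qc Mc])
    have "transpose_mat Q *\<^sub>v z = transpose_mat Q *\<^sub>v Y - transpose_mat Q *\<^sub>v (M *\<^sub>v \<beta>0)"
      unfolding z_def by (rule mult_minus_distrib_mat_vec[OF QTc Y Mb])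
    also have "transpose_mat Q *\<^sub>v (M *\<^sub>v \<beta>0) = A *\<^sub>v (minv A *\<^sub>v (transpose_mat Q *\<^sub>v Y))"
      unfolding \<beta>0_def by (rule cg[OF wc, symmetric])
    also have "\<dots> = (A * minv A) *\<^sub>v (transpose_mat Q *\<^sub>v Y)"
      by (rule assoc_mult_mat_vec[symmetric, OF Ac Ap(1) QtY])
    also have "\<dots> = transpose_mat Q *\<^sub>v Y" unfolding Ap(2) using QtY by simp
    also have "transpose_mat Q *\<^sub>v Y - transpose_mat Q *\<^sub>v Y = 0\<^sub>v (n - m)"
      by (rule minus_cancel_vec[OF QtY])
    finally show ?thesis .
  qed
  obtain c where cc: "c \<in> carrier_vec m" and zT: "z = T *\<^sub>v c"
    using colspace[OF Tc Qc _ T_rank Q_rank QT zc F2] nm by auto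
  have a0: "\<alpha>0 = c"
  proof -
    have "\<alpha>0 = minv TT *\<^sub>v (TT *\<^sub>v c)" unfolding \<alpha>0_def zT TT_def
      by (subst assoc_mult_mat_vec[OF TTc Tc cc]) simp
    also have "\<dots> = (minv TT * TT) *\<^sub>v c" by (rule assoc_mult_mat_vec[symmetric, OF TTp(1) TTmc cc])
    also have "\<dots> = c" unfolding TTp(3) using cc by simp
    finally show ?thesis .
  qed
  have Ta0: "T *\<^sub>v \<alpha>0 = Y - M *\<^sub>v \<beta>0" using zT a0 z_def by simp
  have Kb0c: "K *\<^sub>v \<beta>0 \<in> carrier_vec n" and Eb0c: "E *\<^sub>v \<beta>0 \<in> carrier_vec n"
    and Ta0c: "T *\<^sub>v \<alpha>0 \<in> carrier_vec n" using Kc Ec Tc b0c a0c by auto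
  define r0 where "r0 = Y - T *\<^sub>v \<alpha>0 - K *\<^sub>v \<beta>0"
  have r0c: "r0 \<in> carrier_vec n" unfolding r0_def using Y Ta0c Kb0c by simp
  have r0e: "r0 = lam \<cdot>\<^sub>v (E *\<^sub>v \<beta>0)"
  proof (rule eq_vecI)
    fix i assume "i < dim_vec (lam \<cdot>\<^sub>v (E *\<^sub>v \<beta>0))"
    then have i: "i < n" using Ec by simp
    have "(M *\<^sub>v \<beta>0) $ i = (K *\<^sub>v \<beta>0) $ i + lam * (E *\<^sub>v \<beta>0) $ i"
      unfolding Mv[OF b0c] using i Eb0c Kb0c by (simp add: carrier_vecD[OF Eb0c] carrier_vecD[OF Kb0c] dims)
    then show "r0 $ i = (lam \<cdot>\<^sub>v (E *\<^sub>v \<beta>0)) $ i"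
      unfolding r0_def Ta0 using i Y Eb0c Kb0c Mc b0c by (simp add: carrier_vecD[OF Y] carrier_vecD[OF Eb0c] carrier_vecD[OF Kb0c] carrier_vecD[OF b0c] dims)
  qed (insert r0c Eb0c, simp add: dims)
  have Dr0: "D *\<^sub>v r0 = lam \<cdot>\<^sub>v \<beta>0"
  proof -
    have "D *\<^sub>v r0 = lam \<cdot>\<^sub>v (D *\<^sub>v (E *\<^sub>v \<beta>0))" unfolding r0e by (rule mat_vec_smult[OF D_carrier Eb0c])
    also have "D *\<^sub>v (E *\<^sub>v \<beta>0) = (D * E) *\<^sub>v \<beta>0" by (rule assoc_mult_mat_vec[symmetric, OF D_carrier Ec b0c])
    also have "\<dots> = \<beta>0" unfolding DE using b0c by simp
    finally show ?thesis .
  qed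
  define f0 where "f0 = ridge_obj Y T K D lam \<alpha>0 \<beta>0"
  have expand: "ridge_obj Y T K D lam \<alpha> \<beta> = f0 + (T *\<^sub>v (\<alpha> - \<alpha>0) + K *\<^sub>v (\<beta> - \<beta>0)) \<bullet> (D *\<^sub>v (T *\<^sub>v (\<alpha> - \<alpha>0) + K *\<^sub>v (\<beta> - \<beta>0)))
      + lam * ((\<beta> - \<beta>0) \<bullet> (K *\<^sub>v (\<beta> - \<beta>0)))"
    if \<alpha>: "\<alpha> \<in> carrier_vec m" and \<beta>: "\<beta> \<in> carrier_vec n" for \<alpha> \<beta>
  proof -
    define a where "a = \<alpha> - \<alpha>0"
    define bb where "bb = \<beta> - \<beta>0"
    have ac: "a \<in> carrier_vec m" unfolding a_def using \<alpha> a0c by simp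
    have bc: "bb \<in> carrier_vec n" unfolding bb_def using \<beta> b0c by simp
    define s where "s = T *\<^sub>v a + K *\<^sub>v bb"
    have Tac: "T *\<^sub>v a \<in> carrier_vec n" and Kbc: "K *\<^sub>v bb \<in> carrier_vec n" using Tc Kc ac bc by auto
    have sc: "s \<in> carrier_vec n" unfolding s_def using Tac Kbc by simp
    have Ta: "T *\<^sub>v a = T *\<^sub>v \<alpha> - T *\<^sub>v \<alpha>0" unfolding a_def by (rule mult_minus_distrib_mat_vec[OF Tc \<alpha> a0c])
    have Kb: "K *\<^sub>v bb = K *\<^sub>v \<beta> - K *\<^sub>v \<beta>0" unfolding bb_def by (rule mult_minus_distrib_mat_vec[OF Kc \<beta> b0c])
    have Tac2: "T *\<^sub>v \<alpha> \<in> carrier_vec n" and Kbc2: "K *\<^sub>v \<beta> \<in> carrier_vec n" using Tc Kc \<alpha> \<beta> by auto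
    have res: "Y - T *\<^sub>v \<alpha> - K *\<^sub>v \<beta> = r0 - s"
    proof (rule eq_vecI)
      fix i assume "i < dim_vec (r0 - s)"
      then have i: "i < n" using sc by simp
      show "(Y - T *\<^sub>v \<alpha> - K *\<^sub>v \<beta>) $ i = (r0 - s) $ i"
        unfolding r0_def s_def Ta Kb using i Y Tac2 Kbc2 Ta0c Kb0c by (simp add: carrier_vecD[OF Y] carrier_vecD[OF Tac2] carrier_vecD[OF Kbc2] carrier_vecD[OF Ta0c] carrier_vecD[OF Kb0c] dims)
    qed (insert sc Kbc2, simp add: dims)
    have bet: "\<beta> = \<beta>0 + bb"
    proof (rule eq_vecI)
      fix i assume "i < dim_vec (\<beta>0 + bb)"
      then have i: "i < n" using bc by simp
      show "\<beta> $ i = (\<beta>0 + bb) $ i" unfolding bb_def using i \<beta> b0c by (simp add: carrier_vecD[OF \<beta>] carrier_vecD[OF b0c] dims)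
    qed (insert \<beta> bc, simp add: dims)
    have q1: "(r0 - s) \<bullet> (D *\<^sub>v (r0 - s)) = r0 \<bullet> (D *\<^sub>v r0) - 2 * (s \<bullet> (D *\<^sub>v r0)) + s \<bullet> (D *\<^sub>v s)"
      by (rule quad_sub[OF D_carrier D_sym r0c sc])
    have q2: "\<beta> \<bullet> (K *\<^sub>v \<beta>) = \<beta>0 \<bullet> (K *\<^sub>v \<beta>0) + 2 * (bb \<bullet> (K *\<^sub>v \<beta>0)) + bb \<bullet> (K *\<^sub>v bb)"
      unfolding bet by (rule quad_add[OF Kc K_sym b0c bc])
    have sD: "s \<bullet> (D *\<^sub>v r0) = lam * (bb \<bullet> (K *\<^sub>v \<beta>0))"
    proof -
      have "s \<bullet> (D *\<^sub>v r0) = lam * (s \<bullet> \<beta>0)" unfolding Dr0 by (rule scalar_prod_smult_distrib[OF sc b0c])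
      also have "s \<bullet> \<beta>0 = (T *\<^sub>v a) \<bullet> \<beta>0 + (K *\<^sub>v bb) \<bullet> \<beta>0"
        unfolding s_def by (rule add_scalar_prod_distrib[OF Tac Kbc b0c])
      also have "(T *\<^sub>v a) \<bullet> \<beta>0 = 0"
      proof -
        have "(T *\<^sub>v a) \<bullet> \<beta>0 = \<beta>0 \<bullet> (T *\<^sub>v a)" by (rule comm_scalar_prod[OF Tac b0c])
        also have "\<dots> = (transpose_mat T *\<^sub>v \<beta>0) \<bullet> a" by (rule transpose_vec_mult_scalar[OF Tc ac b0c, symmetric])
        also have "\<dots> = 0" unfolding F1 using ac by simp
        finally show ?thesis .
      qed
      also have "(K *\<^sub>v bb) \<bullet> \<beta>0 = bb \<bullet> (K *\<^sub>v \<beta>0)"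
      proof -
        have "(K *\<^sub>v bb) \<bullet> \<beta>0 = \<beta>0 \<bullet> (K *\<^sub>v bb)" by (rule comm_scalar_prod[OF Kbc b0c])
        also have "\<dots> = bb \<bullet> (K *\<^sub>v \<beta>0)" by (rule sym_form[OF Kc K_sym b0c bc])
        finally show ?thesis .
      qed
      finally show ?thesis by simp
    qed
    have f0e: "f0 = r0 \<bullet> (D *\<^sub>v r0) + lam * (\<beta>0 \<bullet> (K *\<^sub>v \<beta>0))"
      unfolding f0_def ridge_obj_def r0_def ..
    have "ridge_obj Y T K D lam \<alpha> \<beta> = (r0 - s) \<bullet> (D *\<^sub>v (r0 - s)) + lam * (\<beta> \<bullet> (K *\<^sub>v \<beta>))"
      unfolding ridge_obj_def res ..
    also have "\<dots> = f0 + s \<bullet> (D *\<^sub>v s) + lam * (bb \<bullet> (K *\<^sub>v bb))"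
      unfolding q1 q2 sD f0e by (simp add: algebra_simps)
    finally show ?thesis unfolding s_def a_def bb_def .
  qed
  have opt: "f0 \<le> ridge_obj Y T K D lam \<alpha> \<beta>" if \<alpha>: "\<alpha> \<in> carrier_vec m" and \<beta>: "\<beta> \<in> carrier_vec n" for \<alpha> \<beta>
  proof -
    have sc: "T *\<^sub>v (\<alpha> - \<alpha>0) + K *\<^sub>v (\<beta> - \<beta>0) \<in> carrier_vec n" using Tc Kc \<alpha> \<beta> a0c b0c by simp
    have bc: "\<beta> - \<beta>0 \<in> carrier_vec n" using \<beta> b0c by simp
    show ?thesis unfolding expand[OF \<alpha> \<beta>]
      using diag_form(1)[OF D_carrier D_diag D_pos sc] K_psd[OF bc] lam by simp
  qed
  have uniq: "\<alpha> = \<alpha>0 \<and> \<beta> = \<beta>0"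
    if \<alpha>: "\<alpha> \<in> carrier_vec m" and \<beta>: "\<beta> \<in> carrier_vec n" and le: "ridge_obj Y T K D lam \<alpha> \<beta> \<le> f0" for \<alpha> \<beta>
  proof -
    have ac: "\<alpha> - \<alpha>0 \<in> carrier_vec m" using \<alpha> a0c by simp
    have bc: "\<beta> - \<beta>0 \<in> carrier_vec n" using \<beta> b0c by simp
    define s where "s = T *\<^sub>v (\<alpha> - \<alpha>0) + K *\<^sub>v (\<beta> - \<beta>0)"
    have sc: "s \<in> carrier_vec n" unfolding s_def using Tc Kc ac bc by simp
    have s1: "s \<bullet> (D *\<^sub>v s) \<ge> 0" by (rule diag_form(1)[OF D_carrier D_diag D_pos sc])
    have s2: "(\<beta> - \<beta>0) \<bullet> (K *\<^sub>v (\<beta> - \<beta>0)) \<ge> 0" by (rule K_psd[OF bc])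
    have "s \<bullet> (D *\<^sub>v s) + lam * ((\<beta> - \<beta>0) \<bullet> (K *\<^sub>v (\<beta> - \<beta>0))) \<le> 0"
      using le unfolding expand[OF \<alpha> \<beta>] s_def by simp
    then have z1: "s \<bullet> (D *\<^sub>v s) = 0" and z2: "(\<beta> - \<beta>0) \<bullet> (K *\<^sub>v (\<beta> - \<beta>0)) = 0"
      using s1 s2 lam by (smt (verit) mult_pos_pos mult_nonneg_nonneg)+
    have b0: "\<beta> - \<beta>0 = 0\<^sub>v n" by (rule K_pd[OF bc z2])
    have s0: "s = 0\<^sub>v n" by (rule diag_form(2)[OF D_carrier D_diag D_pos sc z1])
    have "K *\<^sub>v (\<beta> - \<beta>0) = 0\<^sub>v n" unfolding b0 by (rule mat_vec_zero[OF Kc])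
    then have "T *\<^sub>v (\<alpha> - \<alpha>0) = 0\<^sub>v n" using s0 unfolding s_def
      using right_zero_vec[of "T *\<^sub>v (\<alpha> - \<alpha>0)" n] Tc ac by simp
    then have a00: "\<alpha> - \<alpha>0 = 0\<^sub>v m" by (rule vec_space.full_rank_ker[OF Tc T_rank ac])
    have "\<alpha> = \<alpha>0"
    proof (rule eq_vecI)
      fix i assume "i < dim_vec \<alpha>0" then have i: "i < m" using a0c by simp
      have "(\<alpha> - \<alpha>0) $ i = 0" unfolding a00 using i by simp
      then show "\<alpha> $ i = \<alpha>0 $ i" using i \<alpha> a0c by (simp add: carrier_vecD[OF \<alpha>] carrier_vecD[OF a0c] dims)
    qed (insert \<alpha> a0c, simp add: dims)
    moreover have "\<beta> = \<beta>0"
    proof (rule eq_vecI)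
      fix i assume "i < dim_vec \<beta>0" then have i: "i < n" using b0c by simp
      have "(\<beta> - \<beta>0) $ i = 0" unfolding b0 using i by simp
      then show "\<beta> $ i = \<beta>0 $ i" using i \<beta> b0c by (simp add: carrier_vecD[OF \<beta>] carrier_vecD[OF b0c] dims)
    qed (insert \<beta> b0c, simp add: dims)
    ultimately show ?thesis by simp
  qed
  have minim: "is_ridge_minimizer n m Y T K D lam (\<alpha>0, \<beta>0)"
    unfolding is_ridge_minimizer_def using a0c b0c opt unfolding f0_def by simp
  have unique: "p = (\<alpha>0, \<beta>0)" if p: "is_ridge_minimizer n m Y T K D lam p" for p
  proof -
    have c1: "fst p \<in> carrier_vec m" and c2: "snd p \<in> carrier_vec n"
      and le: "ridge_obj Y T K D lam (fst p) (snd p) \<le> f0"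
      using p a0c b0c unfolding is_ridge_minimizer_def f0_def by auto
    from uniq[OF c1 c2 le] show ?thesis by (cases p) simp
  qed
  have fit: "T *\<^sub>v \<alpha>0 + K *\<^sub>v \<beta>0 = Y - lam \<cdot>\<^sub>v (E *\<^sub>v \<beta>0)"
  proof (rule eq_vecI)
    fix i assume "i < dim_vec (Y - lam \<cdot>\<^sub>v (E *\<^sub>v \<beta>0))"
    then have i: "i < n" using Ec by simp
    have "(M *\<^sub>v \<beta>0) $ i = (K *\<^sub>v \<beta>0) $ i + lam * (E *\<^sub>v \<beta>0) $ i"
      unfolding Mv[OF b0c] using i Eb0c Kb0c by (simp add: carrier_vecD[OF Eb0c] carrier_vecD[OF Kb0c] dims)
    then show "(T *\<^sub>v \<alpha>0 + K *\<^sub>v \<beta>0) $ i = (Y - lam \<cdot>\<^sub>v (E *\<^sub>v \<beta>0)) $ i"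
      unfolding Ta0 using i Y Eb0c Kb0c Mc b0c by (simp add: carrier_vecD[OF Y] carrier_vecD[OF Eb0c] carrier_vecD[OF Kb0c] carrier_vecD[OF b0c] dims)
  qed (insert Kb0c Eb0c, simp add: dims)
  have bform: "Q * minv A * transpose_mat Q *\<^sub>v Y = \<beta>0"
  proof -
    have QA: "Q * minv A \<in> carrier_mat n (n - m)" using Qc Ap(1) by simp
    have "Q * minv A * transpose_mat Q *\<^sub>v Y = (Q * minv A) *\<^sub>v (transpose_mat Q *\<^sub>v Y)"
      by (rule assoc_mult_mat_vec[OF QA QTc Y])
    also have "\<dots> = Q *\<^sub>v (minv A *\<^sub>v (transpose_mat Q *\<^sub>v Y))"
      by (rule assoc_mult_mat_vec[OF Qc Ap(1) QtY])
    finally show ?thesis unfolding \<beta>0_def .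
  qed
  have aform: "minv TT * transpose_mat T *\<^sub>v (Y - M *\<^sub>v \<beta>0) = \<alpha>0"
    unfolding \<alpha>0_def z_def[symmetric] by (rule assoc_mult_mat_vec[OF TTp(1) TTc zc])
  have main: "(\<forall>k<n - m. \<forall>l<n - m. (k > l + m \<or> l > k + m) \<longrightarrow>
          (transpose_mat Q * M * Q) $$ (k,l) = 0 \<and>
          (transpose_mat Q * K * Q) $$ (k,l) = 0 \<and>
          (transpose_mat Q * E * Q) $$ (k,l) = 0) \<and>
      (\<exists>!p. is_ridge_minimizer n m Y T K D lam p) \<and>
      (\<forall>\<alpha> \<beta>. is_ridge_minimizer n m Y T K D lam (\<alpha>, \<beta>) \<longrightarrow>
          transpose_mat T *\<^sub>v \<beta> = 0\<^sub>v m \<and>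
          \<beta> = Q * minv (transpose_mat Q * M * Q) * transpose_mat Q *\<^sub>v Y \<and>
          \<alpha> = minv (transpose_mat T * T) * transpose_mat T *\<^sub>v (Y - M *\<^sub>v \<beta>) \<and>
          T *\<^sub>v \<alpha> + K *\<^sub>v \<beta> = Y - lam \<cdot>\<^sub>v (E *\<^sub>v \<beta>))"
  proof (intro conjI allI impI)
    fix k l assume "k < n - m" "l < n - m" "l + m < k \<or> k + m < l"
    then show "(transpose_mat Q * M * Q) $$ (k,l) = 0" "(transpose_mat Q * K * Q) $$ (k,l) = 0"
      "(transpose_mat Q * E * Q) $$ (k,l) = 0" using band by auto
  next
    show "\<exists>!p. is_ridge_minimizer n m Y T K D lam p" using minim unique by blast
  next
    fix \<alpha> \<beta> assume "is_ridge_minimizer n m Y T K D lam (\<alpha>, \<beta>)"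
    then have e: "\<alpha> = \<alpha>0" "\<beta> = \<beta>0" using unique by auto
    show "transpose_mat T *\<^sub>v \<beta> = 0\<^sub>v m" unfolding e by (rule F1)
    show "\<beta> = Q * minv (transpose_mat Q * M * Q) * transpose_mat Q *\<^sub>v Y"
      unfolding e A_def[symmetric] bform ..
    show "\<alpha> = minv (transpose_mat T * T) * transpose_mat T *\<^sub>v (Y - M *\<^sub>v \<beta>)"
      unfolding e TT_def[symmetric] aform ..
    show "T *\<^sub>v \<alpha> + K *\<^sub>v \<beta> = Y - lam \<cdot>\<^sub>v (E *\<^sub>v \<beta>)" unfolding e by (rule fit)
  qed
  show ?thesis unfolding Let_def minvD M_def[symmetric] by (rule main)
qed


end
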